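(* Let $(X,\to)$ be a transition system over an alphabet $A$ and let $R_0\subseteq X\times X$ be a preorder. Consider the map $\beta_{R_0}\colon \mathit{Eq}(\mathcal P(X))\to\mathit{Eq}(\mathcal P(X))$, $\beta_{R_0}(R)=\beta_t(R)\cap (R_0)_H$. Then the least fixpoint $\mu\,\beta_{R_0}$ of $\beta_{R_0}$ in the complete lattice $(\mathit{Eq}(\mathcal P(X)),\supseteq)$ equals the set $\Omega(R_0)$ of all pairs $(X_1,X_2)$ of subsets of $X$ such that: whenever $x_1\in X_1$ and $x_1\xrightarrow{\sigma}x_1'$ for some $\sigma\in A^*$, there is $x_2\in X_2$ with $x_2\xrightarrow{\sigma}x_2'$ and $x_1'\mathrel{R_0}x_2'$; and, symmetrically, whenever $x_2\in X_2$ and $x_2\xrightarrow{\sigma}x_2'$, there is $x_1\in X_1$ with $x_1\xrightarrow{\sigma}x_1'$ and $x_2'\mathrel{R_0}x_1'$.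
   Context: A transition system over $A$ is a pair $(X,\to)$ with $\to\subseteq X\times A\times X$; write $x\xrightarrow{a}x'$ for $(x,a,x')\in\to$, $\delta_a(x)=\{x'\mid x\xrightarrow{a}x'\}$, and for $Y\subseteq X$, $\delta_a[Y]=\bigcup_{y\in Y}\delta_a(y)$. For $\sigma=a_1\cdots a_n\in A^*$, $x\xrightarrow{\sigma}x'$ means $x\xrightarrow{a_1}\cdots\xrightarrow{a_n}x'$ (for the empty word, $x'=x$). $\mathit{Eq}(\mathcal P(X))$ is the set of equivalence relations on $\mathcal P(X)$. For $R\subseteq X\times X$, define $R_{\overrightarrow H}\subseteq\mathcal P(X)\times\mathcal P(X)$ by $X_1\mathrel{R_{\overrightarrow H}}X_2$ iff $\forall x_1\in X_1\,\exists x_2\in X_2\colon x_1\mathrel R x_2$, and $R_H=R_{\overrightarrow H}\cap(R_{\overrightarrow H})^{-1}$. For $S\subseteq X$ and $a\in A$, $\Diamond_a(S)=\{x\mid\exists x'\in S\colon x\xrightarrow{a}x'\}$. Define $\alpha_t\colon\mathcal P(\mathcal P(X))\to\mathit{Eq}(\mathcal P(X))$, $\alpha_t(\mathcal S)=\{(X_1,X_2)\mid\forall S\in\mathcal S\colon(X_1\cap S\neq\emptyset\iff X_2\cap S\neq\emptyset)\}$; $\gamma_t\colon\mathit{Eq}(\mathcal P(X))\to\mathcal P(\mathcal P(X))$, $\gamma_t(R)=\{S\subseteq X\mid\forall(X_1,X_2)\in R\colon(X_1\cap S\neq\emptyset\iff X_2\cap S\neq\emptyset)\}$; $\mathit{lo}_t(\mathcal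 S)=\bigcup_{a\in A}\{\Diamond_a(S)\mid S\in\mathcal S\}\cup\{X\}$; and $\beta_t=\alpha_t\circ\mathit{lo}_t\circ\gamma_t$. *)

theory Defs
  imports Main
begin

definition is_lts :: "'x set \<Rightarrow> 'a set \<Rightarrow> ('x \<times> 'a \<times> 'x) set \<Rightarrow> bool" where
  "is_lts X A T \<longleftrightarrow> T \<subseteq> X \<times> A \<times> X"

fun steps :: "('x \<times> 'a \<times> 'x) set \<Rightarrow> 'x \<Rightarrow> 'a list \<Rightarrow> 'x \<Rightarrow> bool" where
  "steps T x [] x' \<longleftrightarrow> x' = x"
| "steps T x (a # \<sigma>) x' \<longleftrightarrow> (\<exists>y. (x, a, y) \<in> T \<and> steps T y \<sigma> x')"

definition Eq_Pow :: "'x set \<Rightarrow> ('x set \<times> 'x set) set set" where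
  "Eq_Pow X = {R. equiv (Pow X) R}"

definition is_preorder :: "'x set \<Rightarrow> ('x \<times> 'x) set \<Rightarrow> bool" where
  "is_preorder X R0 \<longleftrightarrow> R0 \<subseteq> X \<times> X \<and> (\<forall>x\<in>X. (x, x) \<in> R0) \<and> trans R0"

definition RH_fwd :: "'x set \<Rightarrow> ('x \<times> 'x) set \<Rightarrow> ('x set \<times> 'x set) set" where
  "RH_fwd X R = {(X1, X2). X1 \<subseteq> X \<and> X2 \<subseteq> X \<and> (\<forall>x1\<in>X1. \<exists>x2\<in>X2. (x1, x2) \<in> R)}"

definition RH :: "'x set \<Rightarrow> ('x \<times> 'x) set \<Rightarrow> ('x set \<times> 'x set) set" where
  "RH X R = RH_fwd X R \<inter> (RH_fwd X R)\<inverse>"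

definition Diam :: "('x \<times> 'a \<times> 'x) set \<Rightarrow> 'a \<Rightarrow> 'x set \<Rightarrow> 'x set" where
  "Diam T a S = {x. \<exists>x'\<in>S. (x, a, x') \<in> T}"

definition alpha_t :: "'x set \<Rightarrow> 'x set set \<Rightarrow> ('x set \<times> 'x set) set" where
  "alpha_t X \<S> = {(X1, X2). X1 \<subseteq> X \<and> X2 \<subseteq> X \<and>
      (\<forall>S\<in>\<S>. (X1 \<inter> S \<noteq> {} \<longleftrightarrow> X2 \<inter> S \<noteq> {}))}"

definition gamma_t :: "'x set \<Rightarrow> ('x set \<times> 'x set) set \<Rightarrow> 'x set set" where
  "gamma_t X R = {S. S \<subseteq> X \<and>
      (\<forall>(X1, X2)\<in>R. (X1 \<inter> S \<noteq> {} \<longleftrightarrow> X2 \<inter> S \<noteq> {}))}"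

definition lo_t :: "'x set \<Rightarrow> 'a set \<Rightarrow> ('x \<times> 'a \<times> 'x) set \<Rightarrow> 'x set set \<Rightarrow> 'x set set" where
  "lo_t X A T \<S> = (\<Union>a\<in>A. Diam T a ` \<S>) \<union> {X}"

definition beta_t :: "'x set \<Rightarrow> 'a set \<Rightarrow> ('x \<times> 'a \<times> 'x) set
    \<Rightarrow> ('x set \<times> 'x set) set \<Rightarrow> ('x set \<times> 'x set) set" where
  "beta_t X A T R = alpha_t X (lo_t X A T (gamma_t X R))"

definition beta_R0 :: "'x set \<Rightarrow> 'a set \<Rightarrow> ('x \<times> 'a \<times> 'x) set \<Rightarrow> ('x \<times> 'x) set
    \<Rightarrow> ('x set \<times> 'x set) set \<Rightarrow> ('x set \<times> 'x set) set" where
  "beta_R0 X A T R0 R = beta_t X A T R \<inter> RH X R0"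

definition Omega :: "'x set \<Rightarrow> 'a set \<Rightarrow> ('x \<times> 'a \<times> 'x) set \<Rightarrow> ('x \<times> 'x) set
    \<Rightarrow> ('x set \<times> 'x set) set" where
  "Omega X A T R0 = {(X1, X2). X1 \<subseteq> X \<and> X2 \<subseteq> X \<and>
     (\<forall>x1\<in>X1. \<forall>\<sigma>\<in>lists A. \<forall>x1'. steps T x1 \<sigma> x1' \<longrightarrow>
        (\<exists>x2\<in>X2. \<exists>x2'. steps T x2 \<sigma> x2' \<and> (x1', x2') \<in> R0)) \<and>
     (\<forall>x2\<in>X2. \<forall>\<sigma>\<in>lists A. \<forall>x2'. steps T x2 \<sigma> x2' \<longrightarrow>
        (\<exists>x1\<in>X1. \<exists>x1'. steps T x1 \<sigma> x1' \<and> (x2', x1') \<in> R0))}"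

text \<open>Least fixpoint of f in the complete lattice (Eq(P(X)), \<supseteq>):
  a fixpoint in Eq(P(X)) containing every other fixpoint in Eq(P(X)).\<close>
definition is_lfp_sup :: "'x set \<Rightarrow> (('x set \<times> 'x set) set \<Rightarrow> ('x set \<times> 'x set) set)
    \<Rightarrow> ('x set \<times> 'x set) set \<Rightarrow> bool" where
  "is_lfp_sup X f M \<longleftrightarrow> M \<in> Eq_Pow X \<and> f M = M \<and>
     (\<forall>R\<in>Eq_Pow X. f R = R \<longrightarrow> R \<subseteq> M)"

end

theory Submission
  imports Defs
begin

lemma mem_alpha: "(Z1,Z2) \<in> alpha_t X S \<longleftrightarrow> Z1 \<subseteq> X \<and> Z2 \<subseteq> X \<and> (\<forall>s\<in>S. (Z1 \<inter> s \<noteq> {} \<longleftrightarrow> Z2 \<inter> s \<noteq> {}))"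
  by (simp add: alpha_t_def)

lemma mem_RH: "(Z1,Z2) \<in> RH X R0 \<longleftrightarrow> Z1 \<subseteq> X \<and> Z2 \<subseteq> X \<and> (\<forall>x\<in>Z1. \<exists>y\<in>Z2. (x,y)\<in>R0) \<and> (\<forall>x\<in>Z2. \<exists>y\<in>Z1. (x,y)\<in>R0)"
  by (auto simp add: RH_def RH_fwd_def)

lemma alpha_union:
  assumes "P \<subseteq> alpha_t X S"
  shows "(\<Union>(fst ` P), \<Union>(snd ` P)) \<in> alpha_t X S"
proof -
  have h: "fst p \<subseteq> X \<and> snd p \<subseteq> X \<and> (\<forall>s\<in>S. (fst p \<inter> s \<noteq> {} \<longleftrightarrow> snd p \<inter> s \<noteq> {}))" if "p \<in> P" for p
  proof -
    have "p \<in> alpha_t X S" using assms that by blast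
    then show ?thesis by (cases p) (simp add: mem_alpha)
  qed
  have s1: "\<Union>(fst ` P) \<subseteq> X" "\<Union>(snd ` P) \<subseteq> X" by (intro UN_least; simp add: h)+
  have s2: "(\<Union>(fst ` P) \<inter> s \<noteq> {} \<longleftrightarrow> \<Union>(snd ` P) \<inter> s \<noteq> {})" if "s \<in> S" for s
  proof
    assume "\<Union>(fst ` P) \<inter> s \<noteq> {}"
    then obtain p where "p \<in> P" "fst p \<inter> s \<noteq> {}" by auto
    then have "snd p \<inter> s \<noteq> {}" using h that by blast
    then show "\<Union>(snd ` P) \<inter> s \<noteq> {}" using \<open>p \<in> P\<close> by auto
  next
    assume "\<Union>(snd ` P) \<inter> s \<noteq> {}"
    then obtain p where "p \<in> P" "snd p \<inter> s \<noteq> {}" by auto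
    then have "fst p \<inter> s \<noteq> {}" using h that by blast
    then show "\<Union>(fst ` P) \<inter> s \<noteq> {}" using \<open>p \<in> P\<close> by auto
  qed
  show ?thesis unfolding mem_alpha using s1 s2 by (intro conjI ballI)
qed

lemma RH_union:
  assumes "P \<subseteq> RH X R0"
  shows "(\<Union>(fst ` P), \<Union>(snd ` P)) \<in> RH X R0"
proof -
  have h: "fst p \<subseteq> X \<and> snd p \<subseteq> X \<and> (\<forall>x\<in>fst p. \<exists>y\<in>snd p. (x,y)\<in>R0) \<and> (\<forall>x\<in>snd p. \<exists>y\<in>fst p. (x,y)\<in>R0)" if "p \<in> P" for p
  proof -
    have "p \<in> RH X R0" using assms that by blast
    then show ?thesis by (cases p) (simp add: mem_RH)
  qed
  have s1: "\<Union>(fst ` P) \<subseteq> X" "\<Union>(snd ` P) \<subseteq> X" by (intro UN_least; simp add: h)+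
  have s2: "\<exists>y\<in>\<Union>(snd ` P). (x,y)\<in>R0" if hx: "x \<in> \<Union>(fst ` P)" for x
  proof -
    obtain p where "p \<in> P" "x \<in> fst p" using hx by blast
    then obtain y where "y \<in> snd p" "(x,y)\<in>R0" using h by blast
    then show ?thesis using \<open>p \<in> P\<close> by auto
  qed
  have s3: "\<exists>y\<in>\<Union>(fst ` P). (x,y)\<in>R0" if hx: "x \<in> \<Union>(snd ` P)" for x
  proof -
    obtain p where "p \<in> P" "x \<in> snd p" using hx by blast
    then obtain y where "y \<in> fst p" "(x,y)\<in>R0" using h by blast
    then show ?thesis using \<open>p \<in> P\<close> by auto
  qed
  show ?thesis unfolding mem_RH using s1 s2 s3 by (intro conjI ballI)
qed

lemma beta_union:
  assumes "P \<subseteq> beta_R0 X A T R0 Q"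
  shows "(\<Union>(fst ` P), \<Union>(snd ` P)) \<in> beta_R0 X A T R0 Q"
proof -
  have "P \<subseteq> alpha_t X (lo_t X A T (gamma_t X Q))" "P \<subseteq> RH X R0"
    using assms unfolding beta_R0_def beta_t_def by auto
  then show ?thesis using alpha_union RH_union unfolding beta_R0_def beta_t_def by blast
qed

lemma alpha_sym: "(a,b) \<in> alpha_t X S \<Longrightarrow> (b,a) \<in> alpha_t X S"
  unfolding mem_alpha
proof (intro conjI ballI)
  assume h: "a \<subseteq> X \<and> b \<subseteq> X \<and> (\<forall>s\<in>S. (a \<inter> s \<noteq> {}) = (b \<inter> s \<noteq> {}))"
  then show "b \<subseteq> X" "a \<subseteq> X" by simp_all
  fix s assume s: "s \<in> S"
  have "(a \<inter> s \<noteq> {}) = (b \<inter> s \<noteq> {})" using bspec[OF conjunct2[OF conjunct2[OF h]] s] .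
  then show "(b \<inter> s \<noteq> {}) = (a \<inter> s \<noteq> {})" by (rule sym)
qed

lemma alpha_trans: "(a,b) \<in> alpha_t X S \<Longrightarrow> (b,c) \<in> alpha_t X S \<Longrightarrow> (a,c) \<in> alpha_t X S"
  unfolding mem_alpha
proof (intro conjI ballI)
  assume h: "a \<subseteq> X \<and> b \<subseteq> X \<and> (\<forall>s\<in>S. (a \<inter> s \<noteq> {}) = (b \<inter> s \<noteq> {}))"
    and h2: "b \<subseteq> X \<and> c \<subseteq> X \<and> (\<forall>s\<in>S. (b \<inter> s \<noteq> {}) = (c \<inter> s \<noteq> {}))"
  then show "a \<subseteq> X" "c \<subseteq> X" by simp_all
  fix s assume s: "s \<in> S"
  have "(a \<inter> s \<noteq> {}) = (b \<inter> s \<noteq> {})" "(b \<inter> s \<noteq> {}) = (c \<inter> s \<noteq> {})"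
    using bspec[OF conjunct2[OF conjunct2[OF h]] s] bspec[OF conjunct2[OF conjunct2[OF h2]] s] .
  then show "(a \<inter> s \<noteq> {}) = (c \<inter> s \<noteq> {})" by (rule trans)
qed

lemma RH_sym: "(a,b) \<in> RH X R0 \<Longrightarrow> (b,a) \<in> RH X R0"
  unfolding mem_RH by (elim conjE) (intro conjI)

lemma mem_gamma: "S \<in> gamma_t X R \<longleftrightarrow> S \<subseteq> X \<and> (\<forall>p\<in>R. (fst p \<inter> S \<noteq> {} \<longleftrightarrow> snd p \<inter> S \<noteq> {}))"
  unfolding gamma_t_def by (auto simp: case_prod_beta)

lemma beta_equiv:
  assumes "is_preorder X R0"
  shows "equiv (Pow X) (beta_R0 X A T R0 Q)"
proof -
  have R0: "\<forall>x\<in>X. (x,x)\<in>R0" "trans R0" using assms unfolding is_preorder_def by auto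
  define L where "L = lo_t X A T (gamma_t X Q)"
  have B: "beta_R0 X A T R0 Q = alpha_t X L \<inter> RH X R0" unfolding beta_R0_def beta_t_def L_def ..
  show ?thesis unfolding B
  proof (rule equivI)
    show "alpha_t X L \<inter> RH X R0 \<subseteq> Pow X \<times> Pow X"
    proof
      fix p assume "p \<in> alpha_t X L \<inter> RH X R0"
      then show "p \<in> Pow X \<times> Pow X" by (cases p) (simp add: mem_alpha)
    qed
    show "refl_on (Pow X) (alpha_t X L \<inter> RH X R0)"
      unfolding refl_on_def
    proof (intro ballI)
      fix Z assume Z: "Z \<in> Pow X"
      have "(Z,Z) \<in> alpha_t X L" using Z by (simp add: mem_alpha)
      moreover have "(Z,Z) \<in> RH X R0" unfolding mem_RH using Z R0(1) by blast
      ultimately show "(Z,Z) \<in> alpha_t X L \<inter> RH X R0" by blast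
    qed
    show "sym (alpha_t X L \<inter> RH X R0)"
    proof (rule symI)
      fix a b assume "(a,b) \<in> alpha_t X L \<inter> RH X R0"
      then have "(a,b) \<in> alpha_t X L" "(a,b) \<in> RH X R0" by auto
      then have "(b,a) \<in> alpha_t X L" "(b,a) \<in> RH X R0" using alpha_sym RH_sym by blast+
      then show "(b,a) \<in> alpha_t X L \<inter> RH X R0" by blast
    qed
    show "trans (alpha_t X L \<inter> RH X R0)"
    proof (rule transI)
      fix x y z assume xy: "(x, y) \<in> alpha_t X L \<inter> RH X R0" and yz: "(y, z) \<in> alpha_t X L \<inter> RH X R0"
      have "(x,z) \<in> alpha_t X L" using xy yz alpha_trans by blast
      moreover have "(x,z) \<in> RH X R0" unfolding mem_RH
      proof (intro conjI ballI)
        show "x \<subseteq> X" "z \<subseteq> X" using xy yz by (simp_all add: mem_RH)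
      next
        fix u assume "u \<in> x"
        then obtain v where "v \<in> y" "(u,v) \<in> R0" using xy by (auto simp: mem_RH)
        then obtain w where "w \<in> z" "(v,w) \<in> R0" using yz by (auto simp: mem_RH)
        then show "\<exists>w\<in>z. (u,w)\<in>R0" using \<open>(u,v) \<in> R0\<close> R0(2) by (meson transD)
      next
        fix u assume "u \<in> z"
        then obtain v where "v \<in> y" "(u,v) \<in> R0" using yz by (auto simp: mem_RH)
        then obtain w where "w \<in> x" "(v,w) \<in> R0" using xy by (auto simp: mem_RH)
        then show "\<exists>w\<in>x. (u,w)\<in>R0" using \<open>(u,v) \<in> R0\<close> R0(2) by (meson transD)
      qed
      ultimately show "(x,z) \<in> alpha_t X L \<inter> RH X R0" by blast
    qed
  qed
qed

lemma beta_mono: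
  assumes "Q \<subseteq> Q'"
  shows "beta_R0 X A T R0 Q \<subseteq> beta_R0 X A T R0 Q'"
proof -
  have "gamma_t X Q' \<subseteq> gamma_t X Q"
  proof
    fix S assume "S \<in> gamma_t X Q'"
    then show "S \<in> gamma_t X Q" using assms unfolding mem_gamma by blast
  qed
  then have "lo_t X A T (gamma_t X Q') \<subseteq> lo_t X A T (gamma_t X Q)" unfolding lo_t_def by blast
  then have "alpha_t X (lo_t X A T (gamma_t X Q)) \<subseteq> alpha_t X (lo_t X A T (gamma_t X Q'))"
  proof -
    assume sub: "lo_t X A T (gamma_t X Q') \<subseteq> lo_t X A T (gamma_t X Q)"
    show ?thesis
    proof
      fix p assume "p \<in> alpha_t X (lo_t X A T (gamma_t X Q))"
      then show "p \<in> alpha_t X (lo_t X A T (gamma_t X Q'))"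
        using sub by (cases p) (simp add: mem_alpha subset_iff)
    qed
  qed
  then show ?thesis unfolding beta_R0_def beta_t_def by blast
qed


lemma steps_in:
  assumes "is_lts X A T" "steps T x \<sigma> x'" "x \<in> X"
  shows "x' \<in> X"
  using assms(2,3)
proof (induction \<sigma> arbitrary: x)
  case Nil then show ?case by simp
next
  case (Cons a \<sigma>)
  then obtain y where y: "(x,a,y) \<in> T" "steps T y \<sigma> x'" by auto
  have "y \<in> X" using y(1) assms(1) unfolding is_lts_def by auto
  then show ?case using Cons.IH y(2) by blast
qed

definition simw :: "('x \<times> 'a \<times> 'x) set \<Rightarrow> 'a set \<Rightarrow> ('x \<times> 'x) set \<Rightarrow> 'x set \<Rightarrow> 'x set \<Rightarrow> bool" where
  "simw T A R0 X1 X2 \<longleftrightarrow> (\<forall>x1\<in>X1. \<forall>\<sigma>\<in>lists A. \<forall>x1'. steps T x1 \<sigma> x1' \<longrightarrow>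
        (\<exists>x2\<in>X2. \<exists>x2'. steps T x2 \<sigma> x2' \<and> (x1', x2') \<in> R0))"

lemma mem_Omega: "(X1,X2) \<in> Omega X A T R0 \<longleftrightarrow> X1 \<subseteq> X \<and> X2 \<subseteq> X \<and> simw T A R0 X1 X2 \<and> simw T A R0 X2 X1"
  unfolding Omega_def simw_def by simp

lemma simw_refl:
  assumes "is_lts X A T" "is_preorder X R0" "Z \<subseteq> X"
  shows "simw T A R0 Z Z"
  unfolding simw_def
proof (intro ballI allI impI)
  fix x1 \<sigma> x1' assume "x1 \<in> Z" "\<sigma> \<in> lists A" "steps T x1 \<sigma> x1'"
  then have "x1' \<in> X" using steps_in[OF assms(1)] assms(3) by blast
  then have "(x1',x1') \<in> R0" using assms(2) unfolding is_preorder_def by blast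
  then show "\<exists>x2\<in>Z. \<exists>x2'. steps T x2 \<sigma> x2' \<and> (x1', x2') \<in> R0"
    using \<open>x1 \<in> Z\<close> \<open>steps T x1 \<sigma> x1'\<close> by blast
qed

lemma simw_trans:
  assumes "is_preorder X R0" "simw T A R0 X1 X2" "simw T A R0 X2 X3"
  shows "simw T A R0 X1 X3"
  unfolding simw_def
proof (intro ballI allI impI)
  fix x1 \<sigma> x1' assume h: "x1 \<in> X1" "\<sigma> \<in> lists A" "steps T x1 \<sigma> x1'"
  then obtain x2 x2' where "x2 \<in> X2" "steps T x2 \<sigma> x2'" "(x1',x2') \<in> R0"
    using assms(2) unfolding simw_def by blast
  then obtain x3 x3' where "x3 \<in> X3" "steps T x3 \<sigma> x3'" "(x2',x3') \<in> R0"
    using assms(3) h(2) unfolding simw_def by blast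
  moreover have "(x1',x3') \<in> R0" using \<open>(x1',x2') \<in> R0\<close> \<open>(x2',x3') \<in> R0\<close> assms(1)
    unfolding is_preorder_def by (meson transD)
  ultimately show "\<exists>x2\<in>X3. \<exists>x2'. steps T x2 \<sigma> x2' \<and> (x1', x2') \<in> R0" by blast
qed

lemma Omega_equiv:
  assumes "is_lts X A T" "is_preorder X R0"
  shows "equiv (Pow X) (Omega X A T R0)"
proof (rule equivI)
  show "Omega X A T R0 \<subseteq> Pow X \<times> Pow X"
  proof
    fix p assume "p \<in> Omega X A T R0" then show "p \<in> Pow X \<times> Pow X" by (cases p) (simp add: mem_Omega)
  qed
  show "refl_on (Pow X) (Omega X A T R0)" unfolding refl_on_def
    using simw_refl[OF assms] by (simp add: mem_Omega)
  show "sym (Omega X A T R0)" by (rule symI) (simp add: mem_Omega)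
  show "trans (Omega X A T R0)"
  proof (rule transI)
    fix x y z assume "(x,y) \<in> Omega X A T R0" "(y,z) \<in> Omega X A T R0"
    then show "(x,z) \<in> Omega X A T R0" using simw_trans[OF assms(2)] unfolding mem_Omega by blast
  qed
qed

lemma simw_shift:
  assumes "simw T A R0 X1 X2" "a \<in> A"
  shows "simw T A R0 {z. \<exists>x\<in>X1. (x,a,z)\<in>T} {z. \<exists>x\<in>X2. (x,a,z)\<in>T}"
  unfolding simw_def
proof (intro ballI allI impI)
  fix y \<sigma> y' assume "y \<in> {z. \<exists>x\<in>X1. (x,a,z)\<in>T}" "\<sigma> \<in> lists A" "steps T y \<sigma> y'"
  then obtain x where x: "x \<in> X1" "(x,a,y) \<in> T" by blast
  have "steps T x (a#\<sigma>) y'" using x(2) \<open>steps T y \<sigma> y'\<close> by auto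
  moreover have "a#\<sigma> \<in> lists A" using \<open>\<sigma> \<in> lists A\<close> assms(2) by simp
  ultimately obtain x2 x2' where "x2 \<in> X2" "steps T x2 (a#\<sigma>) x2'" "(y',x2') \<in> R0"
    using assms(1) x(1) unfolding simw_def by blast
  then obtain z where "(x2,a,z) \<in> T" "steps T z \<sigma> x2'" by auto
  then show "\<exists>x2\<in>{z. \<exists>x\<in>X2. (x,a,z)\<in>T}. \<exists>x2'. steps T x2 \<sigma> x2' \<and> (y', x2') \<in> R0"
    using \<open>x2 \<in> X2\<close> \<open>(y',x2') \<in> R0\<close> by blast
qed

lemma Omega_shift:
  assumes "is_lts X A T" "(X1,X2) \<in> Omega X A T R0" "a \<in> A"
  shows "({z. \<exists>x\<in>X1. (x,a,z)\<in>T}, {z. \<exists>x\<in>X2. (x,a,z)\<in>T}) \<in> Omega X A T R0"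
proof -
  have "{z. \<exists>x\<in>X1. (x,a,z)\<in>T} \<subseteq> X" "{z. \<exists>x\<in>X2. (x,a,z)\<in>T} \<subseteq> X"
    using assms(1) unfolding is_lts_def by blast+
  moreover have s: "simw T A R0 X1 X2" "simw T A R0 X2 X1" using assms(2) by (simp_all add: mem_Omega)
  ultimately show ?thesis unfolding mem_Omega using simw_shift[OF s(1) assms(3)] simw_shift[OF s(2) assms(3)] by simp
qed

lemma Omega_hit:
  assumes "is_lts X A T" "(X1,X2) \<in> Omega X A T R0" "s \<in> lo_t X A T (gamma_t X (Omega X A T R0))"
    "X1 \<inter> s \<noteq> {}"
  shows "X2 \<inter> s \<noteq> {}"
proof -
  have sub: "X1 \<subseteq> X" "X2 \<subseteq> X" and sw: "simw T A R0 X1 X2" using assms(2) by (simp_all add: mem_Omega)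
  consider "s = X" | a S where "a \<in> A" "S \<in> gamma_t X (Omega X A T R0)" "s = Diam T a S"
    using assms(3) unfolding lo_t_def by blast
  then show ?thesis
  proof cases
    case 1
    then obtain x1 where "x1 \<in> X1" using assms(4) by blast
    moreover have "steps T x1 [] x1" by simp
    ultimately obtain x2 where "x2 \<in> X2" using sw unfolding simw_def by blast
    then show ?thesis using sub 1 by blast
  next
    case 2
    then obtain x1 y where "x1 \<in> X1" "(x1,a,y) \<in> T" "y \<in> S" using assms(4) unfolding Diam_def by blast
    define Y1 where "Y1 = {z. \<exists>x\<in>X1. (x,a,z)\<in>T}"
    define Y2 where "Y2 = {z. \<exists>x\<in>X2. (x,a,z)\<in>T}"
    have "(Y1,Y2) \<in> Omega X A T R0" unfolding Y1_def Y2_def using Omega_shift[OF assms(1,2) 2(1)] .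
    moreover have "y \<in> Y1" unfolding Y1_def using \<open>x1 \<in> X1\<close> \<open>(x1,a,y) \<in> T\<close> by blast
    ultimately have "Y2 \<inter> S \<noteq> {}" using 2(2) \<open>y \<in> S\<close> unfolding mem_gamma by fastforce
    then obtain z x2 where "z \<in> S" "x2 \<in> X2" "(x2,a,z) \<in> T" unfolding Y2_def by blast
    then show ?thesis unfolding 2(3) Diam_def by blast
  qed
qed

lemma Omega_post:
  assumes "is_lts X A T" "is_preorder X R0"
  shows "Omega X A T R0 \<subseteq> beta_R0 X A T R0 (Omega X A T R0)"
proof
  fix p assume p: "p \<in> Omega X A T R0"
  obtain X1 X2 where pe: "p = (X1,X2)" by (cases p)
  have o: "(X1,X2) \<in> Omega X A T R0" "(X2,X1) \<in> Omega X A T R0"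
    using p pe Omega_equiv[OF assms] unfolding equiv_def by (auto dest: symD)
  have sub: "X1 \<subseteq> X" "X2 \<subseteq> X" and sw: "simw T A R0 X1 X2" "simw T A R0 X2 X1"
    using o(1) by (simp_all add: mem_Omega)
  have "(X1,X2) \<in> alpha_t X (lo_t X A T (gamma_t X (Omega X A T R0)))"
    unfolding mem_alpha using sub Omega_hit[OF assms(1) o(1)] Omega_hit[OF assms(1) o(2)] by blast
  moreover have "(X1,X2) \<in> RH X R0" unfolding mem_RH
  proof (intro conjI ballI)
    fix x assume "x \<in> X1"
    moreover have "steps T x [] x" by simp
    ultimately show "\<exists>y\<in>X2. (x,y) \<in> R0" using sw(1) unfolding simw_def by fastforce
  next
    fix x assume "x \<in> X2"
    moreover have "steps T x [] x" by simp
    ultimately show "\<exists>y\<in>X1. (x,y) \<in> R0" using sw(2) unfolding simw_def by fastforce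
  qed (use sub in auto)
  ultimately show "p \<in> beta_R0 X A T R0 (Omega X A T R0)" unfolding pe beta_R0_def beta_t_def by blast
qed


lemma union2:
  assumes U: "\<And>P. P \<subseteq> R \<Longrightarrow> (\<Union>(fst ` P), \<Union>(snd ` P)) \<in> R"
    and "(a,b) \<in> R" "(c,d) \<in> R"
  shows "(a \<union> c, b \<union> d) \<in> R"
proof -
  have "{(a,b),(c,d)} \<subseteq> R" using assms(2,3) by blast
  from U[OF this] show ?thesis by simp
qed

lemma post_fix_half:
  assumes lts: "is_lts X A T"
    and eq: "equiv (Pow X) R"
    and U: "\<And>P. P \<subseteq> R \<Longrightarrow> (\<Union>(fst ` P), \<Union>(snd ` P)) \<in> R"
    and post: "R \<subseteq> beta_R0 X A T R0 R"
    and \<sigma>: "\<sigma> \<in> lists A"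
  shows "\<forall>X1 X2 x1 x1'. (X1,X2) \<in> R \<longrightarrow> x1 \<in> X1 \<longrightarrow> steps T x1 \<sigma> x1' \<longrightarrow>
           (\<exists>x2\<in>X2. \<exists>x2'. steps T x2 \<sigma> x2' \<and> (x1', x2') \<in> R0)"
  using \<sigma>
proof (induction \<sigma>)
  have Rsub: "R \<subseteq> Pow X \<times> Pow X" and Rrefl: "\<And>Z. Z \<subseteq> X \<Longrightarrow> (Z,Z) \<in> R"
    and Rsym: "\<And>a b. (a,b) \<in> R \<Longrightarrow> (b,a) \<in> R"
    and Rtrans: "\<And>a b c. (a,b) \<in> R \<Longrightarrow> (b,c) \<in> R \<Longrightarrow> (a,c) \<in> R"
    using eq unfolding equiv_def refl_on_def by (auto dest: symD transD)
  case Nil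
  show ?case
  proof (intro allI impI)
    fix X1 X2 x1 x1' assume h: "(X1,X2) \<in> R" "x1 \<in> X1" "steps T x1 [] x1'"
    then have "(X1,X2) \<in> RH X R0" using post unfolding beta_R0_def by blast
    then obtain x2 where "x2 \<in> X2" "(x1,x2) \<in> R0" using h(2) unfolding mem_RH by blast
    then show "\<exists>x2\<in>X2. \<exists>x2'. steps T x2 [] x2' \<and> (x1', x2') \<in> R0" using h(3) by auto
  qed
next
  case (Cons a \<sigma>)
  have Rsub: "R \<subseteq> Pow X \<times> Pow X" and Rrefl: "\<And>Z. Z \<subseteq> X \<Longrightarrow> (Z,Z) \<in> R"
    and Rsym: "\<And>a b. (a,b) \<in> R \<Longrightarrow> (b,a) \<in> R"
    and Rtrans: "\<And>a b c. (a,b) \<in> R \<Longrightarrow> (b,c) \<in> R \<Longrightarrow> (a,c) \<in> R"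
    using eq unfolding equiv_def refl_on_def by (auto dest: symD transD)
  have aA: "a \<in> A" using Cons.hyps(1) .
  show ?case
  proof (intro allI impI)
    fix X1 X2 x1 x1' assume h: "(X1,X2) \<in> R" "x1 \<in> X1" "steps T x1 (a#\<sigma>) x1'"
    then obtain y where y: "(x1,a,y) \<in> T" "steps T y \<sigma> x1'" by auto
    have X12: "X1 \<subseteq> X" "X2 \<subseteq> X" using h(1) Rsub by auto
    define Ud where "Ud = {z. \<exists>x\<in>X2. (x,a,z)\<in>T}"
    have UX: "Ud \<subseteq> X" unfolding Ud_def using lts unfolding is_lts_def by blast
    define F where "F = {W. W \<subseteq> X \<and> (W \<union> Ud, Ud) \<in> R}"
    define cl where "cl = \<Union>F"
    have UF: "Ud \<in> F" unfolding F_def using UX Rrefl[OF UX] by simp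
    define P where "P = (\<lambda>W. (W \<union> Ud, Ud)) ` F"
    have "P \<subseteq> R" unfolding P_def F_def by blast
    from U[OF this] have "(\<Union>(fst ` P), \<Union>(snd ` P)) \<in> R" .
    moreover have "\<Union>(fst ` P) = cl" unfolding P_def cl_def using UF by auto
    moreover have "\<Union>(snd ` P) = Ud" unfolding P_def using UF by auto
    ultimately have clU: "(cl, Ud) \<in> R" by simp
    have Ucl: "Ud \<subseteq> cl" unfolding cl_def using UF by blast
    have clX: "cl \<subseteq> X" unfolding cl_def F_def by blast
    show "\<exists>x2\<in>X2. \<exists>x2'. steps T x2 (a#\<sigma>) x2' \<and> (x1', x2') \<in> R0"
    proof (cases "y \<in> cl")
      case True
      then obtain u x2' where "u \<in> Ud" "steps T u \<sigma> x2'" "(x1',x2') \<in> R0"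
        using Cons.IH clU y(2) by blast
      then obtain x2 where "x2 \<in> X2" "(x2,a,u) \<in> T" unfolding Ud_def by blast
      then show ?thesis using \<open>steps T u \<sigma> x2'\<close> \<open>(x1',x2') \<in> R0\<close> by auto
    next
      case False
      define S where "S = X - cl"
      have key: "Z2 \<subseteq> cl" if "(Z1,Z2) \<in> R" "Z1 \<subseteq> cl" for Z1 Z2
      proof -
        have Z2X: "Z2 \<subseteq> X" using that(1) Rsub by auto
        have A1: "(Z2 \<union> Ud, Z1 \<union> Ud) \<in> R" using union2[OF U Rsym[OF that(1)] Rrefl[OF UX]] .
        have Z1U: "Z1 \<union> Ud \<subseteq> X" using that(2) clX UX by blast
        have "(cl \<union> (Z1 \<union> Ud), Ud \<union> (Z1 \<union> Ud)) \<in> R"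
          using union2[OF U clU Rrefl[OF Z1U]] .
        moreover have "cl \<union> (Z1 \<union> Ud) = cl" "Ud \<union> (Z1 \<union> Ud) = Z1 \<union> Ud" using that(2) Ucl by blast+
        ultimately have "(cl, Z1 \<union> Ud) \<in> R" by simp
        then have "(Z1 \<union> Ud, Ud) \<in> R" using Rsym Rtrans clU by blast
        then have "(Z2 \<union> Ud, Ud) \<in> R" using Rtrans A1 by blast
        then have "Z2 \<in> F" unfolding F_def using Z2X by blast
        then show ?thesis unfolding cl_def by blast
      qed
      have "S \<in> gamma_t X R" unfolding mem_gamma
      proof (intro conjI ballI)
        show "S \<subseteq> X" unfolding S_def by blast
        fix p assume p: "p \<in> R"
        obtain Z1 Z2 where pe: "p = (Z1,Z2)" by (cases p)
        have "(Z1,Z2) \<in> R" "(Z2,Z1) \<in> R" using p pe Rsym by auto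
        moreover have "Z1 \<subseteq> X" "Z2 \<subseteq> X" using p pe Rsub by auto
        ultimately have "Z1 \<subseteq> cl \<longleftrightarrow> Z2 \<subseteq> cl" using key by blast
        moreover have "Z1 \<inter> S = {} \<longleftrightarrow> Z1 \<subseteq> cl" "Z2 \<inter> S = {} \<longleftrightarrow> Z2 \<subseteq> cl"
          using \<open>Z1 \<subseteq> X\<close> \<open>Z2 \<subseteq> X\<close> unfolding S_def by blast+
        ultimately show "(fst p \<inter> S \<noteq> {}) = (snd p \<inter> S \<noteq> {})" unfolding pe by simp
      qed
      then have DS: "Diam T a S \<in> lo_t X A T (gamma_t X R)" unfolding lo_t_def using aA by blast
      have "(X1,X2) \<in> alpha_t X (lo_t X A T (gamma_t X R))" using h(1) post
        unfolding beta_R0_def beta_t_def by blast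
      then have iff: "(X1 \<inter> Diam T a S \<noteq> {}) = (X2 \<inter> Diam T a S \<noteq> {})"
        using DS unfolding mem_alpha by blast
      have "y \<in> X" using y(1) lts unfolding is_lts_def by blast
      then have "y \<in> S" unfolding S_def using False by blast
      then have "x1 \<in> X1 \<inter> Diam T a S" using h(2) y(1) unfolding Diam_def by blast
      then have "X2 \<inter> Diam T a S \<noteq> {}" using iff by blast
      then obtain x2 z where "x2 \<in> X2" "(x2,a,z) \<in> T" "z \<in> S" unfolding Diam_def by blast
      then have "z \<in> Ud" unfolding Ud_def by blast
      then have "z \<in> cl" using Ucl by blast
      then show ?thesis using \<open>z \<in> S\<close> unfolding S_def by blast
    qed
  qed
qed


lemma post_fix:
  assumes lts: "is_lts X A T"
    and eq: "equiv (Pow X) R"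
    and U: "\<And>P. P \<subseteq> R \<Longrightarrow> (\<Union>(fst ` P), \<Union>(snd ` P)) \<in> R"
    and post: "R \<subseteq> beta_R0 X A T R0 R"
  shows "R \<subseteq> Omega X A T R0"
proof
  fix p assume p: "p \<in> R"
  obtain X1 X2 where pe: "p = (X1,X2)" by (cases p)
  have r: "(X1,X2) \<in> R" "(X2,X1) \<in> R" using p pe eq unfolding equiv_def by (auto dest: symD)
  have sub: "X1 \<subseteq> X" "X2 \<subseteq> X" using r eq unfolding equiv_def by auto
  have H: "\<And>\<sigma>. \<sigma> \<in> lists A \<Longrightarrow> \<forall>X1 X2 x1 x1'. (X1,X2) \<in> R \<longrightarrow> x1 \<in> X1 \<longrightarrow> steps T x1 \<sigma> x1' \<longrightarrow>
           (\<exists>x2\<in>X2. \<exists>x2'. steps T x2 \<sigma> x2' \<and> (x1', x2') \<in> R0)"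
    using post_fix_half[OF lts eq U post] by blast
  have "simw T A R0 X1 X2" "simw T A R0 X2 X1" unfolding simw_def using H r by blast+
  then show "p \<in> Omega X A T R0" unfolding pe mem_Omega using sub by blast
qed

theorem mainTheorem1:
  fixes X :: "'x set" and A :: "'a set" and T :: "('x \<times> 'a \<times> 'x) set"
    and R0 :: "('x \<times> 'x) set"
  assumes "is_lts X A T"
    and "is_preorder X R0"
  shows "is_lfp_sup X (beta_R0 X A T R0) (Omega X A T R0)"
proof -
  let ?f = "beta_R0 X A T R0"
  let ?O = "Omega X A T R0"
  have O1: "?O \<subseteq> ?f ?O" using Omega_post[OF assms] .
  have "?f ?O \<subseteq> ?f (?f ?O)" using beta_mono[OF O1] .
  then have "?f ?O \<subseteq> ?O"
    using post_fix[OF assms(1) beta_equiv[OF assms(2)] beta_union] by blast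
  then have fixO: "?f ?O = ?O" using O1 by blast
  have "?O \<in> Eq_Pow X" unfolding Eq_Pow_def using Omega_equiv[OF assms] by simp
  moreover have "\<forall>R\<in>Eq_Pow X. ?f R = R \<longrightarrow> R \<subseteq> ?O"
  proof (intro ballI impI)
    fix R assume R: "R \<in> Eq_Pow X" "?f R = R"
    have eq: "equiv (Pow X) R" using R(1) unfolding Eq_Pow_def by simp
    have U: "\<And>P. P \<subseteq> R \<Longrightarrow> (\<Union>(fst ` P), \<Union>(snd ` P)) \<in> R"
      using beta_union[of _ X A T R0 R] R(2) by simp
    show "R \<subseteq> ?O" using post_fix[OF assms(1) eq U] R(2) by simp
  qed
  ultimately show ?thesis unfolding is_lfp_sup_def using fixO by blast
qed

end
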